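(* Consider a finite super-modular game with player set $\mathcal V$ and binary action sets $\{\pm1\}$. Then: (i) the maps $f^+,f^-,g^+,g^-:\mathcal X\to\mathcal X$ are monotone nondecreasing (i.e., $x\le y$ implies $f^\pm(x)\le f^\pm(y)$ and $g^\pm(x)\le g^\pm(y)$); (ii) a configuration $x$ is an equilibrium if and only if $f^+(x)=x=f^-(x)$; (iii) a configuration $x$ is a strict equilibrium if and only if $g^+(x)=x=g^-(x)$.
   Context: Game: finite player set $\mathcal V$, each player has action set $\{-1,+1\}$, configurations $x\in\mathcal X=\{-1,+1\}^{\mathcal V}$, utilities $u_i:\mathcal X\to\mathbb R$; write $u_i(x)=u_i(x_i,x_{-i})$. Best response: $\mathcal B_i(x_{-i})=\arg\max_{x_i\in\{\pm1\}}u_i(x_i,x_{-i})$. An equilibrium is $x^*$ with $x_i^*\in\mathcal B_i(x^*_{-i})$ for all $i$; it is strict if $\mathcal B_i(x^*_{-i})=\{x^*_i\}$ for all $i$. The game is super-modular if for every $i$, $u_i(1,x_{-i})-u_i(-1,x_{-i})\ge u_i(1,y_{-i})-u_i(-1,y_{-i})$ whenever $x_{-i}\ge y_{-i}$ (componentwise order). $\bigvee L,\bigwedge L$ denote entrywise max and min of a set $L$. Paths: a length-$l$ admissible path from $x$ to $y$ is $(x^{(0)},\dots,x^{(l)})$ with $x^{(0)}=x$, $x^{(l)}=y$, and for each $k$ a player $i_k$ with $x^{(k)}_{-i_k}=x^{(k-1)}_{-i_k}$ and $x^{(k)}_{i_k}\ne x^{(k-1)}_{i_k}$ (length $0$ allowed).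 It is an I-path if $u_{i_k}(x^{(k)})>u_{i_k}(x^{(k-1)})$ for all $k$, a BR-path if $u_{i_k}(x^{(k)})\ge u_{i_k}(x^{(k-1)})$ for all $k$; monotone if $x^{(0)}\lneq\cdots\lneq x^{(l)}$, anti-monotone if $x^{(0)}\gneq\cdots\gneq x^{(l)}$. Maps: $f^+(x)=\bigvee\{y: y$ reachable from $x$ by a monotone I-path$\}$, $f^-(x)=\bigwedge\{y: y$ reachable from $x$ by an anti-monotone I-path$\}$, $g^+(x)=\bigvee\{y: y$ reachable from $x$ by a monotone BR-path$\}$, $g^-(x)=\bigwedge\{y: y$ reachable from $x$ by an anti-monotone BR-path$\}$. *)

theory Defs
  imports Complex_Main
begin

type_synonym 'v config = "'v \<Rightarrow> int"
type_synonym 'v utils = "'v \<Rightarrow> 'v config \<Rightarrow> real"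

definition Conf :: "'v config set" where
  "Conf = {x. \<forall>i. x i \<in> {-1, 1}}"

definition best_resp :: "'v utils \<Rightarrow> 'v \<Rightarrow> 'v config \<Rightarrow> int set" where
  "best_resp u i x = {a \<in> {-1, 1}. \<forall>b \<in> {-1, 1}. u i (x(i := b)) \<le> u i (x(i := a))}"

definition equilibrium :: "'v utils \<Rightarrow> 'v config \<Rightarrow> bool" where
  "equilibrium u x \<longleftrightarrow> x \<in> Conf \<and> (\<forall>i. x i \<in> best_resp u i x)"

definition strict_equilibrium :: "'v utils \<Rightarrow> 'v config \<Rightarrow> bool" where
  "strict_equilibrium u x \<longleftrightarrow> x \<in> Conf \<and> (\<forall>i. best_resp u i x = {x i})"

definition supermodular :: "'v utils \<Rightarrow> bool" where
  "supermodular u \<longleftrightarrow> (\<forall>i x y. x \<in> Conf \<longrightarrow> y \<in> Conf \<longrightarrow> (\<forall>j. j \<noteq> i \<longrightarrow> y j \<le> x j) \<longrightarrow>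
     u i (x(i := 1)) - u i (x(i := -1)) \<ge> u i (y(i := 1)) - u i (y(i := -1)))"

definition I_step :: "'v utils \<Rightarrow> 'v config \<Rightarrow> 'v config \<Rightarrow> bool" where
  "I_step u x y \<longleftrightarrow> x \<in> Conf \<and> y \<in> Conf \<and>
     (\<exists>i. (\<forall>j. j \<noteq> i \<longrightarrow> y j = x j) \<and> y i \<noteq> x i \<and> u i y > u i x)"

definition BR_step :: "'v utils \<Rightarrow> 'v config \<Rightarrow> 'v config \<Rightarrow> bool" where
  "BR_step u x y \<longleftrightarrow> x \<in> Conf \<and> y \<in> Conf \<and>
     (\<exists>i. (\<forall>j. j \<noteq> i \<longrightarrow> y j = x j) \<and> y i \<noteq> x i \<and> u i y \<ge> u i x)"

definition mono_I_reach :: "'v utils \<Rightarrow> 'v config \<Rightarrow> 'v config \<Rightarrow> bool" where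
  "mono_I_reach u = (\<lambda>a b. I_step u a b \<and> a < b)\<^sup>*\<^sup>*"

definition anti_I_reach :: "'v utils \<Rightarrow> 'v config \<Rightarrow> 'v config \<Rightarrow> bool" where
  "anti_I_reach u = (\<lambda>a b. I_step u a b \<and> b < a)\<^sup>*\<^sup>*"

definition mono_BR_reach :: "'v utils \<Rightarrow> 'v config \<Rightarrow> 'v config \<Rightarrow> bool" where
  "mono_BR_reach u = (\<lambda>a b. BR_step u a b \<and> a < b)\<^sup>*\<^sup>*"

definition anti_BR_reach :: "'v utils \<Rightarrow> 'v config \<Rightarrow> 'v config \<Rightarrow> bool" where
  "anti_BR_reach u = (\<lambda>a b. BR_step u a b \<and> b < a)\<^sup>*\<^sup>*"

definition f_plus :: "'v utils \<Rightarrow> 'v config \<Rightarrow> 'v config" where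
  "f_plus u x = (\<lambda>i. Max {y i | y. mono_I_reach u x y})"

definition f_minus :: "'v utils \<Rightarrow> 'v config \<Rightarrow> 'v config" where
  "f_minus u x = (\<lambda>i. Min {y i | y. anti_I_reach u x y})"

definition g_plus :: "'v utils \<Rightarrow> 'v config \<Rightarrow> 'v config" where
  "g_plus u x = (\<lambda>i. Max {y i | y. mono_BR_reach u x y})"

definition g_minus :: "'v utils \<Rightarrow> 'v config \<Rightarrow> 'v config" where
  "g_minus u x = (\<lambda>i. Min {y i | y. anti_BR_reach u x y})"

end

theory Submission
  imports Defs
begin

definition stepQ :: "(real \<Rightarrow> real \<Rightarrow> bool) \<Rightarrow> 'v utils \<Rightarrow> 'v config \<Rightarrow> 'v config \<Rightarrow> bool" where
  "stepQ Q u x y \<longleftrightarrow> x \<in> Conf \<and> y \<in> Conf \<and>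
     (\<exists>i. (\<forall>j. j \<noteq> i \<longrightarrow> y j = x j) \<and> y i \<noteq> x i \<and> Q (u i x) (u i y))"

definition Qok :: "(real \<Rightarrow> real \<Rightarrow> bool) \<Rightarrow> bool" where
  "Qok Q \<longleftrightarrow> (\<forall>p q p' q'. Q p q \<longrightarrow> q - p \<le> q' - p' \<longrightarrow> Q p' q')"

lemma Qok_less: "Qok (<)" by (auto simp: Qok_def)
lemma Qok_le: "Qok (\<le>)" by (auto simp: Qok_def)

lemma I_step_eq: "I_step u = stepQ (\<lambda>a b. a < b) u"
  by (intro ext) (auto simp: I_step_def stepQ_def)
lemma BR_step_eq: "BR_step u = stepQ (\<lambda>a b. a \<le> b) u"
  by (intro ext) (auto simp: BR_step_def stepQ_def)

abbreviation "MR Q u \<equiv> (\<lambda>a b. stepQ Q u a b \<and> a < b)\<^sup>*\<^sup>*"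
abbreviation "AR Q u \<equiv> (\<lambda>a b. stepQ Q u a b \<and> b < a)\<^sup>*\<^sup>*"

definition gp where "gp Q u x = (\<lambda>i. Max {y i | y. MR Q u x y})"
definition gm where "gm Q u x = (\<lambda>i. Min {y i | y. AR Q u x y})"

lemma Conf_val: "x \<in> Conf \<Longrightarrow> x i = -1 \<or> x i = 1"
  by (auto simp: Conf_def)

lemma Conf_upd: "x \<in> Conf \<Longrightarrow> b = -1 \<or> b = 1 \<Longrightarrow> x(i := b) \<in> Conf"
  by (auto simp: Conf_def)

lemma Conf_sup: "x \<in> Conf \<Longrightarrow> y \<in> Conf \<Longrightarrow> sup x y \<in> Conf"
  unfolding Conf_def by (auto simp: sup_fun_def sup_max max_def)

lemma Conf_inf: "x \<in> Conf \<Longrightarrow> y \<in> Conf \<Longrightarrow> inf x y \<in> Conf"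
  unfolding Conf_def by (auto simp: inf_fun_def inf_min min_def)

lemma mono_step:
  assumes "stepQ Q u a b" "a < b"
  shows "\<exists>i. a i = -1 \<and> b = a(i := 1) \<and> Q (u i a) (u i (a(i := 1)))"
proof -
  from assms(1) obtain i where a: "a \<in> Conf" "b \<in> Conf" and
    i: "\<forall>j. j \<noteq> i \<longrightarrow> b j = a j" "b i \<noteq> a i" "Q (u i a) (u i b)"
    by (auto simp: stepQ_def)
  have "a i \<le> b i" using assms(2) by (auto simp: less_fun_def le_fun_def)
  with i(2) Conf_val[OF a(1), of i] Conf_val[OF a(2), of i] have "a i = -1" "b i = 1" by auto
  moreover have "b = a(i := 1)" using i(1) \<open>b i = 1\<close> by (auto simp: fun_eq_iff)
  ultimately show ?thesis using i(3) by auto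
qed

lemma anti_step:
  assumes "stepQ Q u a b" "b < a"
  shows "\<exists>i. a i = 1 \<and> b = a(i := -1) \<and> Q (u i a) (u i (a(i := -1)))"
proof -
  from assms(1) obtain i where a: "a \<in> Conf" "b \<in> Conf" and
    i: "\<forall>j. j \<noteq> i \<longrightarrow> b j = a j" "b i \<noteq> a i" "Q (u i a) (u i b)"
    by (auto simp: stepQ_def)
  have "b i \<le> a i" using assms(2) by (auto simp: less_fun_def le_fun_def)
  with i(2) Conf_val[OF a(1), of i] Conf_val[OF a(2), of i] have "a i = 1" "b i = -1" by auto
  moreover have "b = a(i := -1)" using i(1) \<open>b i = -1\<close> by (auto simp: fun_eq_iff)
  ultimately show ?thesis using i(3) by auto
qed

lemma MR_Conf: "MR Q u x y \<Longrightarrow> x \<in> Conf \<Longrightarrow> y \<in> Conf"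
  by (induction rule: rtranclp_induct) (auto simp: stepQ_def)
lemma AR_Conf: "AR Q u x y \<Longrightarrow> x \<in> Conf \<Longrightarrow> y \<in> Conf"
  by (induction rule: rtranclp_induct) (auto simp: stepQ_def)

lemma mono_lift:
  assumes sm: "supermodular u" and q: "Qok Q" and x: "x \<in> Conf" and y: "y \<in> Conf"
    and xy: "x \<le> y" and r: "MR Q u x x'"
  shows "MR Q u y (sup x' y)"
  using r
proof (induction rule: rtranclp_induct)
  case base
  then show ?case using xy by (simp add: sup_absorb2)
next
  case (step a b)
  have aC: "a \<in> Conf" using MR_Conf[OF step(1) x] .
  from step(2) obtain i where ai: "a i = -1" and b: "b = a(i := 1)"
    and Qa: "Q (u i a) (u i (a(i := 1)))" using mono_step by blast
  show ?case
  proof (cases "y i = 1")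
    case True
    have "sup b y = sup a y" using True ai b by (auto simp: fun_eq_iff sup_fun_def sup_max)
    then show ?thesis using step(3) by simp
  next
    case False
    then have yi: "y i = -1" using Conf_val[OF y] by auto
    define c where "c = sup a y"
    have cC: "c \<in> Conf" unfolding c_def using Conf_sup[OF aC y] .
    have ci: "c i = -1" using ai yi by (simp add: c_def)
    have sb: "sup b y = c(i := 1)" using b yi by (auto simp: fun_eq_iff sup_fun_def sup_max c_def)
    have "u i (c(i := 1)) - u i (c(i := -1)) \<ge> u i (a(i := 1)) - u i (a(i := -1))"
      using sm cC aC unfolding supermodular_def c_def by (auto simp: sup_fun_def sup_max)
    moreover have "c(i := -1) = c" "a(i := -1) = a" using ci ai by auto
    ultimately have "Q (u i c) (u i (c(i := 1)))" using q Qa unfolding Qok_def by fastforce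
    moreover have "c(i := 1) \<in> Conf" using Conf_upd[OF cC] by auto
    moreover have "c < c(i := 1)" using ci
      by (auto simp: less_fun_def le_fun_def intro!: exI[of _ i])
    ultimately have "stepQ Q u c (c(i := 1)) \<and> c < c(i := 1)"
      using cC ci unfolding stepQ_def by (auto intro!: exI[of _ i])
    then show ?thesis using step(3) sb c_def
      by (metis (no_types, lifting) rtranclp.rtrancl_into_rtrancl)
  qed
qed

lemma anti_lift:
  assumes sm: "supermodular u" and q: "Qok Q" and x: "x \<in> Conf" and y: "y \<in> Conf"
    and xy: "x \<le> y" and r: "AR Q u y y'"
  shows "AR Q u x (inf y' x)"
  using r
proof (induction rule: rtranclp_induct)
  case base
  then show ?case using xy by (simp add: inf_absorb2)
next
  case (step a b)
  have aC: "a \<in> Conf" using AR_Conf[OF step(1) y] .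
  from step(2) obtain i where ai: "a i = 1" and b: "b = a(i := -1)"
    and Qa: "Q (u i a) (u i (a(i := -1)))" using anti_step by blast
  show ?case
  proof (cases "x i = -1")
    case True
    have "inf b x = inf a x" using True ai b by (auto simp: fun_eq_iff inf_fun_def inf_min)
    then show ?thesis using step(3) by simp
  next
    case False
    then have xi: "x i = 1" using Conf_val[OF x] by auto
    define c where "c = inf a x"
    have cC: "c \<in> Conf" unfolding c_def using Conf_inf[OF aC x] .
    have ci: "c i = 1" using ai xi by (simp add: c_def)
    have sb: "inf b x = c(i := -1)" using b xi by (auto simp: fun_eq_iff inf_fun_def inf_min c_def)
    have "u i (a(i := 1)) - u i (a(i := -1)) \<ge> u i (c(i := 1)) - u i (c(i := -1))"
      using sm cC aC unfolding supermodular_def c_def by (auto simp: inf_fun_def inf_min)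
    moreover have "c(i := 1) = c" "a(i := 1) = a" using ci ai by auto
    ultimately have "Q (u i c) (u i (c(i := -1)))" using q Qa unfolding Qok_def by fastforce
    moreover have "c(i := -1) \<in> Conf" using Conf_upd[OF cC] by auto
    moreover have "c(i := -1) < c" using ci
      by (auto simp: less_fun_def le_fun_def intro!: exI[of _ i])
    ultimately have "stepQ Q u c (c(i := -1)) \<and> c(i := -1) < c"
      using cC ci unfolding stepQ_def by (auto intro!: exI[of _ i])
    then show ?thesis using step(3) sb c_def
      by (metis (no_types, lifting) rtranclp.rtrancl_into_rtrancl)
  qed
qed

lemma MR_fin: "x \<in> Conf \<Longrightarrow> finite {y i | y. MR Q u x y}"
proof (rule finite_subset[of _ "{-1, 1}"])
  assume x: "x \<in> Conf"
  show "{y i | y. MR Q u x y} \<subseteq> {-1, 1}" using MR_Conf[OF _ x] Conf_val by fastforce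
qed simp
lemma AR_fin: "x \<in> Conf \<Longrightarrow> finite {y i | y. AR Q u x y}"
proof (rule finite_subset[of _ "{-1, 1}"])
  assume x: "x \<in> Conf"
  show "{y i | y. AR Q u x y} \<subseteq> {-1, 1}" using AR_Conf[OF _ x] Conf_val by fastforce
qed simp

lemma gp_mono:
  assumes sm: "supermodular u" and q: "Qok Q" and x: "x \<in> Conf" and y: "y \<in> Conf"
    and xy: "x \<le> y"
  shows "gp Q u x \<le> gp Q u y"
  unfolding le_fun_def gp_def
proof
  fix i
  show "Max {z i | z. MR Q u x z} \<le> Max {z i | z. MR Q u y z}"
  proof (subst Max_le_iff)
    show "finite {z i | z. MR Q u x z}" using MR_fin[OF x] .
    show "{z i | z. MR Q u x z} \<noteq> {}" by auto
    show "\<forall>a\<in>{z i | z. MR Q u x z}. a \<le> Max {z i | z. MR Q u y z}"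
    proof clarify
      fix z assume "MR Q u x z"
      then have "MR Q u y (sup z y)" using mono_lift[OF sm q x y xy] by blast
      then have "sup z y i \<in> {z i | z. MR Q u y z}" by blast
      then have "sup z y i \<le> Max {z i | z. MR Q u y z}"
        using MR_fin[OF y] by (intro Max_ge)
      then show "z i \<le> Max {z i | z. MR Q u y z}" by (auto simp: sup_fun_def sup_max)
    qed
  qed
qed

lemma gm_mono:
  assumes sm: "supermodular u" and q: "Qok Q" and x: "x \<in> Conf" and y: "y \<in> Conf"
    and xy: "x \<le> y"
  shows "gm Q u x \<le> gm Q u y"
  unfolding le_fun_def gm_def
proof
  fix i
  show "Min {z i | z. AR Q u x z} \<le> Min {z i | z. AR Q u y z}"
  proof (subst Min_ge_iff)
    show "finite {z i | z. AR Q u y z}" using AR_fin[OF y] .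
    show "{z i | z. AR Q u y z} \<noteq> {}" by auto
    show "\<forall>a\<in>{z i | z. AR Q u y z}. Min {z i | z. AR Q u x z} \<le> a"
    proof clarify
      fix z assume "AR Q u y z"
      then have "AR Q u x (inf z x)" using anti_lift[OF sm q x y xy] by blast
      then have "inf z x i \<in> {z i | z. AR Q u x z}" by blast
      then have "Min {z i | z. AR Q u x z} \<le> inf z x i"
        using AR_fin[OF x] by (intro Min_le)
      then show "Min {z i | z. AR Q u x z} \<le> z i" by (auto simp: inf_fun_def inf_min)
    qed
  qed
qed

lemma fixed_iff:
  assumes x: "x \<in> Conf"
  shows "(gp Q u x = x \<and> x = gm Q u x) \<longleftrightarrow> \<not> (\<exists>y. stepQ Q u x y)"
proof
  assume no: "\<not> (\<exists>y. stepQ Q u x y)"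
  have "MR Q u x z \<Longrightarrow> z = x" for z
    by (erule converse_rtranclpE) (use no in auto)
  then have A: "{z i | z. MR Q u x z} = {x i}" for i by auto
  have "AR Q u x z \<Longrightarrow> z = x" for z
    by (erule converse_rtranclpE) (use no in auto)
  then have B: "{z i | z. AR Q u x z} = {x i}" for i by auto
  show "gp Q u x = x \<and> x = gm Q u x" unfolding gp_def gm_def A B by auto
next
  assume fx: "gp Q u x = x \<and> x = gm Q u x"
  show "\<not> (\<exists>y. stepQ Q u x y)"
  proof
    assume "\<exists>y. stepQ Q u x y"
    then obtain y i where s: "stepQ Q u x y" and yC: "y \<in> Conf"
      and i: "\<forall>j. j \<noteq> i \<longrightarrow> y j = x j" "y i \<noteq> x i" by (auto simp: stepQ_def)
    show False
    proof (cases "x i = -1")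
      case True
      then have "y i = 1" using i(2) Conf_val[OF yC, of i] by auto
      then have "y = x(i := 1)" using i(1) by (auto simp: fun_eq_iff)
      then have "x < y" using True by (auto simp: less_fun_def le_fun_def intro!: exI[of _ i])
      then have "MR Q u x y" using s by auto
      then have "y i \<le> gp Q u x i" unfolding gp_def using MR_fin[OF x]
        by (intro Max_ge) auto
      then show False using fx True \<open>y i = 1\<close> by auto
    next
      case False
      then have xi: "x i = 1" using Conf_val[OF x] by auto
      then have "y i = -1" using i(2) Conf_val[OF yC, of i] by auto
      then have "y = x(i := -1)" using i(1) by (auto simp: fun_eq_iff)
      then have "y < x" using xi by (auto simp: less_fun_def le_fun_def intro!: exI[of _ i])
      then have "AR Q u x y" using s by auto
      then have "gm Q u x i \<le> y i" unfolding gm_def using AR_fin[OF x]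
        by (intro Min_le) auto
      moreover have "gm Q u x i = 1" using fx xi by metis
      ultimately show False using \<open>y i = -1\<close> by simp
    qed
  qed
qed

lemma step_flip:
  assumes x: "x \<in> Conf"
  shows "(\<exists>y. stepQ Q u x y) \<longleftrightarrow> (\<exists>i. Q (u i x) (u i (x(i := - x i))))"
proof
  assume "\<exists>y. stepQ Q u x y"
  then obtain y i where yC: "y \<in> Conf"
      and i: "\<forall>j. j \<noteq> i \<longrightarrow> y j = x j" "y i \<noteq> x i" "Q (u i x) (u i y)" by (auto simp: stepQ_def)
  have "y i = - x i" using i(2) Conf_val[OF yC, of i] Conf_val[OF x, of i] by auto
  then have "y = x(i := - x i)" using i(1) by (auto simp: fun_eq_iff)
  then show "\<exists>i. Q (u i x) (u i (x(i := - x i)))" using i(3) by auto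
next
  assume "\<exists>i. Q (u i x) (u i (x(i := - x i)))"
  then obtain i where q: "Q (u i x) (u i (x(i := - x i)))" by auto
  have "x(i := - x i) \<in> Conf" using Conf_upd[OF x] Conf_val[OF x, of i] by auto
  moreover have "x i \<noteq> - x i" using Conf_val[OF x, of i] by auto
  ultimately show "\<exists>y. stepQ Q u x y" using x q unfolding stepQ_def
    by (intro exI[of _ "x(i := - x i)"]) auto
qed

lemma eq_iff:
  assumes x: "x \<in> Conf"
  shows "equilibrium u x \<longleftrightarrow> \<not> (\<exists>i. u i x < u i (x(i := - x i)))"
proof -
  have "x i \<in> best_resp u i x \<longleftrightarrow> \<not> u i x < u i (x(i := - x i))" for i
  proof -
    show ?thesis
    proof (cases "x i = 1")
      case True
      then have e: "x(i := 1) = x" by auto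
      show ?thesis using True unfolding best_resp_def by (auto simp: e not_less)
    next
      case False
      then have xi: "x i = -1" using Conf_val[OF x, of i] by auto
      then have e: "x(i := -1) = x" by auto
      show ?thesis using xi unfolding best_resp_def by (auto simp: e not_less)
    qed
  qed
  then show ?thesis using x unfolding equilibrium_def by auto
qed

lemma seq_iff:
  assumes x: "x \<in> Conf"
  shows "strict_equilibrium u x \<longleftrightarrow> \<not> (\<exists>i. u i x \<le> u i (x(i := - x i)))"
proof -
  have "best_resp u i x = {x i} \<longleftrightarrow> \<not> u i x \<le> u i (x(i := - x i))" for i
  proof -
    show ?thesis
    proof (cases "x i = 1")
      case True
      then have e: "x(i := 1) = x" by auto
      show ?thesis using True unfolding best_resp_def by (auto simp: e not_le set_eq_iff dest: spec[of _ "-1"] spec[of _ 1])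
    next
      case False
      then have xi: "x i = -1" using Conf_val[OF x, of i] by auto
      then have e: "x(i := -1) = x" by auto
      show ?thesis using xi unfolding best_resp_def by (auto simp: e not_le set_eq_iff dest: spec[of _ "-1"] spec[of _ 1])
    qed
  qed
  then show ?thesis using x unfolding strict_equilibrium_def by auto
qed

theorem lemma6:
  fixes u :: "('v::finite) utils"
  assumes "supermodular u"
  shows "(\<forall>x \<in> Conf. \<forall>y \<in> Conf. x \<le> y \<longrightarrow>
            f_plus u x \<le> f_plus u y \<and> f_minus u x \<le> f_minus u y \<and>
            g_plus u x \<le> g_plus u y \<and> g_minus u x \<le> g_minus u y)
       \<and> (\<forall>x \<in> Conf. equilibrium u x \<longleftrightarrow> f_plus u x = x \<and> x = f_minus u x)
       \<and> (\<forall>x \<in> Conf. strict_equilibrium u x \<longleftrightarrow> g_plus u x = x \<and> x = g_minus u x)"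
proof -
  have F1: "f_plus u = gp (<) u" "f_minus u = gm (<) u"
    by (intro ext; simp add: f_plus_def f_minus_def gp_def gm_def mono_I_reach_def
        anti_I_reach_def I_step_eq)+
  have F2: "g_plus u = gp (\<le>) u" "g_minus u = gm (\<le>) u"
    by (intro ext; simp add: g_plus_def g_minus_def gp_def gm_def mono_BR_reach_def
        anti_BR_reach_def BR_step_eq)+
  have P1: "\<forall>x \<in> Conf. \<forall>y \<in> Conf. x \<le> y \<longrightarrow>
            gp (<) u x \<le> gp (<) u y \<and> gm (<) u x \<le> gm (<) u y \<and>
            gp (\<le>) u x \<le> gp (\<le>) u y \<and> gm (\<le>) u x \<le> gm (\<le>) u y"
    using gp_mono[OF assms Qok_less] gm_mono[OF assms Qok_less]
      gp_mono[OF assms Qok_le] gm_mono[OF assms Qok_le] by blast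
  have P2: "\<forall>x \<in> Conf. equilibrium u x \<longleftrightarrow> gp (<) u x = x \<and> x = gm (<) u x"
  proof
    fix x :: "'v config" assume x: "x \<in> Conf"
    show "equilibrium u x \<longleftrightarrow> gp (<) u x = x \<and> x = gm (<) u x"
      unfolding fixed_iff[OF x] step_flip[OF x] eq_iff[OF x] ..
  qed
  have P3: "\<forall>x \<in> Conf. strict_equilibrium u x \<longleftrightarrow> gp (\<le>) u x = x \<and> x = gm (\<le>) u x"
  proof
    fix x :: "'v config" assume x: "x \<in> Conf"
    show "strict_equilibrium u x \<longleftrightarrow> gp (\<le>) u x = x \<and> x = gm (\<le>) u x"
      unfolding fixed_iff[OF x] step_flip[OF x] seq_iff[OF x] ..
  qed
  show ?thesis unfolding F1 F2 using P1 P2 P3 by blast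
qed

end
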